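(* Let $\boldsymbol{b} = (b_n)_{n \geq 0}$ and $\boldsymbol{\lambda} = (\lambda_n)_{n \geq 0}$ be sequences of positive integers, and let \[ \xi(\boldsymbol{b}, \boldsymbol{\lambda}) = [0, \overline{b_0}^{\lambda_0}, \overline{b_1}^{\lambda_1}, \overline{b_2}^{\lambda_2}, \ldots] \] be the real number whose continued fraction expansion has $0$ as integer part, followed by $\lambda_0$ partial quotients equal to $b_0$, then $\lambda_1$ partial quotients equal to $b_1$, and so on. Assume that \[ \lim_{n \to \infty} b_n = \lim_{n \to \infty} \lambda_n = \lim_{n \to \infty} \frac{\log b_{n+1}}{\sum_{k=0}^{n} \lambda_k \log b_k} = +\infty. \] Then $\xi(\boldsymbol{b}, \boldsymbol{\lambda})$ is a Liouville number, and \[ w_{=2}(\xi(\boldsymbol{b}, \boldsymbol{\lambda})) = w_{=2}^{*}(\xi(\boldsymbol{b}, \boldsymbol{\lambda})) = +\infty. \]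
   Context: For a polynomial $P \in \mathbb{Z}[X]$, $H(P)$ denotes the maximum of the absolute values of its coefficients. For a real algebraic number $\alpha$, $H(\alpha) = H(P)$, where $P$ is the minimal polynomial of $\alpha$ over $\mathbb{Z}$. Let $\xi$ be real and $n \geq 1$ an integer. $w_1(\xi)$ is the supremum of the real numbers $w$ such that, for arbitrarily large $H$, there is a polynomial $P \in \mathbb{Z}[X]$ of degree at most $1$ with $H(P) \leq H$ and $0 < |P(\xi)| \leq H^{-w}$. A real number $\xi$ is a Liouville number if $w_1(\xi) = +\infty$. $w_{=n}(\xi)$ is the supremum of the real numbers $w$ such that, for arbitrarily large $H$, there is an irreducible polynomial $P \in \mathbb{Z}[X]$ of degree exactly $n$ with $H(P) \leq H$ and $0 < |P(\xi)| \leq H^{-w}$. $w_{=n}^{*}(\xi)$ is the supremum of the real numbers $w^{*}$ such that, for arbitrarily large $H$, there is a real algebraic number $\alpha$ of degree exactly $n$ with $H(\alpha) \leq H$ and $0 < |\xi - \alpha| \leq H(\alpha)^{-1} H^{-w^{*}}$. The notation $\overline{a}^{\lambda}$ inside a continued fraction means that the letter $a$ is repeated $\lambda$ times. *)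

theory Defs
  imports Complex_Main "HOL-Computational_Algebra.Polynomial"
    "HOL-Computational_Algebra.Polynomial_Factorial" "HOL-Library.Extended_Real"
begin

definition height :: "int poly \<Rightarrow> int" where
  "height P = Max ((\<lambda>i. \<bar>coeff P i\<bar>) ` {..degree P})"

fun fin_cf :: "(nat \<Rightarrow> nat) \<Rightarrow> nat \<Rightarrow> nat \<Rightarrow> real" where
  "fin_cf a k 0 = real (a k)"
| "fin_cf a k (Suc n) = real (a k) + 1 / fin_cf a (Suc k) n"

definition cf_value :: "(nat \<Rightarrow> nat) \<Rightarrow> real" where
  "cf_value a = lim (\<lambda>n. fin_cf a 0 n)"

(* Partial quotients of [0, b_0 (lambda_0 times), b_1 (lambda_1 times), ...] *)
definition block_quotients :: "(nat \<Rightarrow> nat) \<Rightarrow> (nat \<Rightarrow> nat) \<Rightarrow> nat \<Rightarrow> nat" where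
  "block_quotients b l m =
     (if m = 0 then 0 else b (LEAST j. m \<le> (\<Sum>k\<le>j. l k)))"

definition xi_bl :: "(nat \<Rightarrow> nat) \<Rightarrow> (nat \<Rightarrow> nat) \<Rightarrow> real" where
  "xi_bl b l = cf_value (block_quotients b l)"

definition w1 :: "real \<Rightarrow> ereal" where
  "w1 \<xi> = Sup {ereal w | w. \<forall>H0. \<exists>H::real. H > H0 \<and>
      (\<exists>P::int poly. degree P \<le> 1 \<and> real_of_int (height P) \<le> H \<and>
          0 < \<bar>poly (map_poly real_of_int P) \<xi>\<bar> \<and> \<bar>poly (map_poly real_of_int P) \<xi>\<bar> \<le> H powr (-w))}"

definition liouville :: "real \<Rightarrow> bool" where
  "liouville \<xi> \<longleftrightarrow> w1 \<xi> = \<infinity>"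

definition w_eq :: "nat \<Rightarrow> real \<Rightarrow> ereal" where
  "w_eq n \<xi> = Sup {ereal w | w. \<forall>H0. \<exists>H::real. H > H0 \<and>
      (\<exists>P::int poly. irreducible P \<and> degree P = n \<and> real_of_int (height P) \<le> H \<and>
          0 < \<bar>poly (map_poly real_of_int P) \<xi>\<bar> \<and> \<bar>poly (map_poly real_of_int P) \<xi>\<bar> \<le> H powr (-w))}"

(* minimal polynomial over Z: irreducible integer polynomial vanishing at alpha;
   it is unique up to sign, so its height and degree are well defined *)
definition is_min_poly_Z :: "int poly \<Rightarrow> real \<Rightarrow> bool" where
  "is_min_poly_Z P \<alpha> \<longleftrightarrow> irreducible P \<and> degree P \<ge> 1 \<and> poly (map_poly real_of_int P) \<alpha> = 0"

definition w_star_eq :: "nat \<Rightarrow> real \<Rightarrow> ereal" where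
  "w_star_eq n \<xi> = Sup {ereal w | w. \<forall>H0. \<exists>H::real. H > H0 \<and>
      (\<exists>\<alpha>::real. \<exists>P::int poly. is_min_poly_Z P \<alpha> \<and> degree P = n \<and>
          real_of_int (height P) \<le> H \<and>
          0 < \<bar>\<xi> - \<alpha>\<bar> \<and> \<bar>\<xi> - \<alpha>\<bar> \<le> (1 / real_of_int (height P)) * H powr (-w))}"

end

theory Submission
  imports Defs
begin


lemma pos_lin:
  fixes x y z :: real
  assumes "x \<ge> 1" "y > 0" "z \<ge> 0"
  shows "x * y + z > 0"
proof -
  have "x * y > 0" using assms by (intro mult_pos_pos) auto
  then show ?thesis using assms(3) by linarith
qed

fun cfx :: "(nat \<Rightarrow> nat) \<Rightarrow> nat \<Rightarrow> real \<Rightarrow> real" where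
  "cfx a 0 x = real (a 0) + 1 / x"
| "cfx a (Suc n) x = real (a 0) + 1 / cfx (\<lambda>i. a (Suc i)) n x"

fun cp :: "(nat \<Rightarrow> nat) \<Rightarrow> nat \<Rightarrow> nat" where
  "cp a 0 = 1"
| "cp a (Suc 0) = a 0"
| "cp a (Suc (Suc n)) = a (Suc n) * cp a (Suc n) + cp a n"

fun cq :: "(nat \<Rightarrow> nat) \<Rightarrow> nat \<Rightarrow> nat" where
  "cq a 0 = 0"
| "cq a (Suc 0) = 1"
| "cq a (Suc (Suc n)) = a (Suc n) * cq a (Suc n) + cq a n"

lemma fin_cf_shift: "fin_cf a k n = fin_cf (\<lambda>i. a (k + i)) 0 n"
proof (induction n arbitrary: a k)
  case 0 then show ?case by simp
next
  case (Suc n)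
  have "fin_cf a (Suc k) n = fin_cf (\<lambda>i. a (Suc k + i)) 0 n" by (rule Suc.IH)
  moreover have "fin_cf (\<lambda>i. a (k + i)) (Suc 0) n = fin_cf (\<lambda>i. a (Suc k + i)) 0 n"
    using Suc.IH[of "\<lambda>i. a (k+i)" 1] by simp
  ultimately show ?case by simp
qed

lemma fin_cf_split: "fin_cf a 0 (Suc n + m) = cfx a n (fin_cf a (Suc n) m)"
proof (induction n arbitrary: a)
  case 0 then show ?case by simp
next
  case (Suc n)
  have "fin_cf a 0 (Suc (Suc n) + m) = a 0 + 1 / fin_cf a 1 (Suc n + m)" by simp
  also have "fin_cf a 1 (Suc n + m) = fin_cf (\<lambda>i. a (Suc i)) 0 (Suc n + m)"
    by (subst fin_cf_shift) simp
  also have "\<dots> = cfx (\<lambda>i. a (Suc i)) n (fin_cf (\<lambda>i. a (Suc i)) (Suc n) m)" by (rule Suc.IH)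
  also have "fin_cf (\<lambda>i. a (Suc i)) (Suc n) m = fin_cf a (Suc (Suc n)) m"
    by (subst (1 2) fin_cf_shift) simp
  finally show ?case by simp
qed

lemma cfx_Suc_last: "cfx a (Suc n) x = cfx a n (real (a (Suc n)) + 1 / x)"
proof (induction n arbitrary: a)
  case 0 then show ?case by simp
next
  case (Suc n)
  show ?case using Suc.IH[of "\<lambda>i. a (Suc i)"] by simp
qed

lemma cfx_gt: "x > 0 \<Longrightarrow> cfx a n x > real (a 0)"
proof (induction n arbitrary: a)
  case 0 then show ?case by simp
next
  case (Suc n)
  have "cfx (\<lambda>i. a (Suc i)) n x > 0" using Suc.IH[of "\<lambda>i. a (Suc i)"] Suc.prems
    by (meson of_nat_0_le_iff order_le_less_trans)
  then show ?case by simp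
qed

lemma fin_cf_ge: "fin_cf a k n \<ge> real (a k)"
proof (induction n arbitrary: k)
  case 0 then show ?case by simp
next
  case (Suc n)
  have "fin_cf a (Suc k) n \<ge> 0" using Suc.IH[of "Suc k"] by linarith
  then show ?case by simp
qed


definition posq :: "(nat \<Rightarrow> nat) \<Rightarrow> bool" where
  "posq a \<longleftrightarrow> (\<forall>k\<ge>1. a k \<ge> 1)"

lemma cq_basic:
  assumes "posq a"
  shows "cq a (Suc n) \<ge> 1 \<and> cq a n \<le> cq a (Suc n)"
proof (induction n rule: nat_less_induct)
  case (1 n)
  show ?case
  proof (cases n)
    case 0 then show ?thesis by simp
  next
    case (Suc m)
    have a: "a (Suc m) \<ge> 1" using assms unfolding posq_def by simp
    have "cq a (Suc m) \<ge> 1" using 1 Suc by (cases m) auto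
    then have "a (Suc m) * cq a (Suc m) \<ge> cq a (Suc m)" using a by simp
    then have "cq a (Suc m) \<le> a (Suc m) * cq a (Suc m) + cq a m" by linarith
    then show ?thesis using Suc \<open>cq a (Suc m) \<ge> 1\<close> by simp
  qed
qed

lemma cq_lower: "cq a (Suc (Suc n)) \<ge> a (Suc n) * cq a (Suc n)"
  by simp

lemma cpq_det:
  "int (cp a (Suc n)) * int (cq a n) - int (cp a n) * int (cq a (Suc n)) = (-1) ^ Suc n"
proof (induction n)
  case 0 then show ?case by simp
next
  case (Suc n)
  show ?case using Suc.IH by (simp add: algebra_simps)
qed

lemma cfx_closed:
  fixes x :: real
  assumes "posq a" "x > 0"
  shows "cfx a n x = (cp a (Suc n) * x + cp a n) / (cq a (Suc n) * x + cq a n)"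
  using assms(2)
proof (induction n arbitrary: x)
  case 0 then show ?case by (simp add: field_simps)
next
  case (Suc n)
  define y where "y = real (a (Suc n)) + 1 / x"
  have y: "y > 0" using Suc.prems unfolding y_def by (simp add: add_nonneg_pos)
  have q1: "real (cq a (Suc n)) \<ge> 1" using cq_basic[OF assms(1), of n] by simp
  have "cfx a (Suc n) x = cfx a n y" unfolding y_def by (rule cfx_Suc_last)
  also have "\<dots> = (cp a (Suc n) * y + cp a n) / (cq a (Suc n) * y + cq a n)" by (rule Suc.IH[OF y])
  also have "\<dots> = (cp a (Suc (Suc n)) * x + cp a (Suc n)) / (cq a (Suc (Suc n)) * x + cq a (Suc n))"
  proof -
    have d: "real (cq a (Suc n)) * y + cq a n > 0" using q1 y
      by (intro pos_lin) auto
    have x0: "x \<noteq> 0" using Suc.prems by simp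
    have e1: "cp a (Suc n) * y + cp a n = (cp a (Suc (Suc n)) * x + cp a (Suc n)) / x"
      using x0 unfolding y_def by (simp add: field_simps)
    have e2: "cq a (Suc n) * y + cq a n = (cq a (Suc (Suc n)) * x + cq a (Suc n)) / x"
      using x0 unfolding y_def by (simp add: field_simps)
    show ?thesis unfolding e1 e2 using x0 by simp
  qed
  finally show ?case .
qed

definition Rp :: "(nat \<Rightarrow> nat) \<Rightarrow> nat \<Rightarrow> nat" where
  "Rp a n = (\<Prod>k<n. a k + 1)"

lemma Rp_pos: "Rp a n > 0"
  unfolding Rp_def by (rule prod_pos) simp

lemma Rp_mono: "Rp a n \<le> Rp a (Suc n)"
  by (simp add: Rp_def)

lemma cpq_le_Rp: "cp a n \<le> Rp a n \<and> cq a n \<le> Rp a n"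
proof (induction n rule: nat_less_induct)
  case (1 n)
  show ?case
  proof (cases n)
    case 0 then show ?thesis by (simp add: Rp_def)
  next
    case (Suc m)
    show ?thesis
    proof (cases m)
      case 0 then show ?thesis using Suc by (simp add: Rp_def)
    next
      case (Suc k)
      have ih1: "cp a (Suc k) \<le> Rp a (Suc k) \<and> cq a (Suc k) \<le> Rp a (Suc k)" using 1 Suc \<open>n = Suc m\<close> by simp
      have ih2: "cp a k \<le> Rp a k \<and> cq a k \<le> Rp a k" using 1 Suc \<open>n = Suc m\<close> by simp
      have m: "Rp a k \<le> Rp a (Suc k)" by (rule Rp_mono)
      have R: "Rp a (Suc (Suc k)) = (a (Suc k) + 1) * Rp a (Suc k)" by (simp add: Rp_def)
      have "cp a (Suc (Suc k)) \<le> a (Suc k) * Rp a (Suc k) + Rp a (Suc k)"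
        using ih1 ih2 m by (simp add: add_mono)
      moreover have "cq a (Suc (Suc k)) \<le> a (Suc k) * Rp a (Suc k) + Rp a (Suc k)"
        using ih1 ih2 m by (simp add: add_mono)
      ultimately show ?thesis using R Suc \<open>n = Suc m\<close> by (simp add: algebra_simps)
    qed
  qed
qed

lemma mob_diff:
  fixes P P' Q Q' s t :: real
  assumes "Q * s + Q' \<noteq> 0" "Q * t + Q' \<noteq> 0"
  shows "(P * s + P') / (Q * s + Q') - (P * t + P') / (Q * t + Q')
         = (P * Q' - P' * Q) * (s - t) / ((Q * s + Q') * (Q * t + Q'))"
  using assms by (simp add: field_simps)

lemma mob_bound:
  fixes P P' Q Q' s t :: real
  assumes "Q \<ge> 1" "Q' \<ge> 0" "s \<ge> 1" "t \<ge> 1" "\<bar>P * Q' - P' * Q\<bar> = 1"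
  shows "\<bar>(P * s + P') / (Q * s + Q') - (P * t + P') / (Q * t + Q')\<bar> \<le> 1 / Q^2"
proof -
  have ds: "Q * s + Q' \<ge> Q * s" "Q * s > 0" using assms by auto
  have dt: "Q * t + Q' \<ge> Q * t" "Q * t > 0" using assms by auto
  have "\<bar>(P * s + P') / (Q * s + Q') - (P * t + P') / (Q * t + Q')\<bar>
      = \<bar>s - t\<bar> / ((Q * s + Q') * (Q * t + Q'))"
    using mob_diff[of Q s Q' t P P'] ds dt assms(5) by (simp add: abs_mult abs_divide)
  also have "\<dots> \<le> \<bar>s - t\<bar> / ((Q * s) * (Q * t))"
    using ds dt by (intro divide_left_mono mult_mono) auto
  also have "\<dots> \<le> (s * t) / ((Q * s) * (Q * t))"
  proof -
    have "s \<le> s * t" "t \<le> s * t" using assms(3,4)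
      by (simp_all add: mult_le_cancel_left1 mult_le_cancel_right1)
    then have "\<bar>s - t\<bar> \<le> s * t" using assms(3,4) by linarith
    then show ?thesis using ds dt by (intro divide_right_mono) auto
  qed
  also have "\<dots> = 1 / Q^2" using ds dt assms(3,4) by (simp add: field_simps power2_eq_square)
  finally show ?thesis .
qed


lemma cq_growth:
  assumes "posq a"
  shows "real (cq a (Suc n)) \<ge> real n / 2"
proof (induction n rule: nat_less_induct)
  case (1 n)
  show ?case
  proof (cases n)
    case 0 then show ?thesis by simp
  next
    case (Suc m)
    show ?thesis
    proof (cases m)
      case 0 then show ?thesis using Suc cq_basic[OF assms, of 1] by simp
    next
      case (Suc k)
      have ih: "real (cq a (Suc k)) \<ge> real k / 2" using 1 Suc \<open>n = Suc m\<close> by simp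
      have a: "a (Suc (Suc k)) \<ge> 1" using assms unfolding posq_def by simp
      have c1: "cq a (Suc (Suc k)) \<ge> 1" using cq_basic[OF assms, of "Suc k"] by simp
      have "cq a (Suc (Suc (Suc k))) = a (Suc (Suc k)) * cq a (Suc (Suc k)) + cq a (Suc k)" by simp
      also have "\<dots> \<ge> 1 + cq a (Suc k)" using a c1
        by (metis add_le_mono1 mult_le_mono nat_mult_1)
      finally have "real (cq a (Suc (Suc (Suc k)))) \<ge> 1 + real (cq a (Suc k))" by linarith
      then show ?thesis using ih Suc \<open>n = Suc m\<close> by simp
    qed
  qed
qed

lemma posq_shift: "posq a \<Longrightarrow> (\<forall>k. (\<lambda>i. a (Suc n + i)) k \<ge> 1)"
  unfolding posq_def by simp

lemma posq_shift': "posq a \<Longrightarrow> posq (\<lambda>i. a (Suc n + i))"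
  unfolding posq_def by simp

definition mobp :: "(nat \<Rightarrow> nat) \<Rightarrow> nat \<Rightarrow> real \<Rightarrow> real" where
  "mobp a n x = (real (cp a (Suc n)) * x + real (cp a n)) / (real (cq a (Suc n)) * x + real (cq a n))"

lemma det_abs: "\<bar>real (cp a (Suc n)) * real (cq a n) - real (cp a n) * real (cq a (Suc n))\<bar> = 1"
proof -
  have "real_of_int (int (cp a (Suc n)) * int (cq a n) - int (cp a n) * int (cq a (Suc n))) = (-1) ^ Suc n"
    by (subst cpq_det) simp
  then have "real (cp a (Suc n)) * real (cq a n) - real (cp a n) * real (cq a (Suc n)) = (-1) ^ Suc n"
    by simp
  then show ?thesis by simp
qed

lemma mobp_bound:
  assumes "posq a" "s \<ge> 1" "t \<ge> 1"
  shows "\<bar>mobp a n s - mobp a n t\<bar> \<le> 1 / real (cq a (Suc n))^2"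
  unfolding mobp_def
  using cq_basic[OF assms(1), of n] assms det_abs[of a n]
  by (intro mob_bound) auto

lemma fin_cf_mobp:
  assumes "posq a" "m > n"
  shows "fin_cf a 0 m = mobp a n (fin_cf a (Suc n) (m - Suc n))"
proof -
  have p: "fin_cf a (Suc n) (m - Suc n) > 0"
  proof -
    have "real (a (Suc n)) \<ge> 1" using assms(1) unfolding posq_def by simp
    then show ?thesis using fin_cf_ge[of a "Suc n" "m - Suc n"] by linarith
  qed
  have "fin_cf a 0 m = fin_cf a 0 (Suc n + (m - Suc n))" using assms(2) by simp
  also have "\<dots> = cfx a n (fin_cf a (Suc n) (m - Suc n))" by (rule fin_cf_split)
  also have "\<dots> = mobp a n (fin_cf a (Suc n) (m - Suc n))"
    unfolding mobp_def using cfx_closed[OF assms(1) p] by simp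
  finally show ?thesis .
qed

lemma fin_cf_ge1: "posq a \<Longrightarrow> k \<ge> 1 \<Longrightarrow> fin_cf a k j \<ge> 1"
proof -
  assume "posq a" "k \<ge> 1"
  then have "real (a k) \<ge> 1" unfolding posq_def by simp
  then show ?thesis using fin_cf_ge[of a k j] by linarith
qed

lemma cf_conv:
  assumes "posq a"
  shows "(\<lambda>m. fin_cf a 0 m) \<longlonglongrightarrow> cf_value a"
proof -
  have "Cauchy (\<lambda>m. fin_cf a 0 m)"
  proof (rule metric_CauchyI)
    fix e :: real assume e: "e > 0"
    define n where "n = nat \<lceil>2 / e\<rceil> + 1"
    have n: "real n > 2 / e" unfolding n_def by linarith
    have q: "real (cq a (Suc n)) \<ge> real n / 2" by (rule cq_growth[OF assms])
    have "real n / 2 > 1 / e" using n by simp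
    then have qe: "real (cq a (Suc n)) > 1 / e" using q by linarith
    have q1: "real (cq a (Suc n)) \<ge> 1" using cq_basic[OF assms, of n] by simp
    have "1 / real (cq a (Suc n))^2 \<le> 1 / real (cq a (Suc n))"
      using q1 by (simp add: field_simps power2_eq_square)
    also have "\<dots> < e" using qe e q1
      by (metis mult.commute less_trans divide_less_eq zero_less_divide_1_iff)
    finally have bnd: "1 / real (cq a (Suc n))^2 < e" .
    show "\<exists>M. \<forall>m\<ge>M. \<forall>m'\<ge>M. dist (fin_cf a 0 m) (fin_cf a 0 m') < e"
    proof (intro exI allI impI)
      fix m m' assume mm: "Suc n \<le> m" "Suc n \<le> m'"
      have "dist (fin_cf a 0 m) (fin_cf a 0 m') =
          \<bar>mobp a n (fin_cf a (Suc n) (m - Suc n)) - mobp a n (fin_cf a (Suc n) (m' - Suc n))\<bar>"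
        using fin_cf_mobp[OF assms, of n m] fin_cf_mobp[OF assms, of n m'] mm
        by (simp add: dist_real_def)
      also have "\<dots> \<le> 1 / real (cq a (Suc n))^2"
        by (intro mobp_bound assms fin_cf_ge1) auto
      finally show "dist (fin_cf a 0 m) (fin_cf a 0 m') < e" using bnd by linarith
    qed
  qed
  then have "convergent (\<lambda>m. fin_cf a 0 m)" by (simp add: Cauchy_convergent_iff)
  then show ?thesis unfolding cf_value_def by (simp add: convergent_LIMSEQ_iff)
qed


lemma cf_tail:
  assumes "posq a"
  shows "cf_value a = mobp a n (cf_value (\<lambda>i. a (Suc n + i)))
         \<and> cf_value (\<lambda>i. a (Suc n + i)) \<ge> real (a (Suc n))"
proof -
  define z where "z = cf_value (\<lambda>i. a (Suc n + i))"
  have lim1: "(\<lambda>k. fin_cf a (Suc n) k) \<longlonglongrightarrow> z"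
    using cf_conv[OF posq_shift'[OF assms, of n]] unfolding z_def
    by (subst fin_cf_shift) simp
  have ge: "z \<ge> real (a (Suc n))"
    by (rule LIMSEQ_le_const[OF lim1]) (auto intro: fin_cf_ge)
  have "real (a (Suc n)) \<ge> 1" using assms unfolding posq_def by simp
  then have z1: "z \<ge> 1" using ge by linarith
  have q1: "real (cq a (Suc n)) \<ge> 1" using cq_basic[OF assms, of n] by simp
  have den: "real (cq a (Suc n)) * z + real (cq a n) \<noteq> 0"
  proof -
    have "real (cq a (Suc n)) * z \<ge> 1 * 1" using z1 q1 by (intro mult_mono) auto
    moreover have "real (cq a n) \<ge> 0" by simp
    ultimately show ?thesis by linarith
  qed
  have lim2: "(\<lambda>k. mobp a n (fin_cf a (Suc n) k)) \<longlonglongrightarrow> mobp a n z"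
    unfolding mobp_def by (intro tendsto_intros lim1 den)
  have eq: "(\<lambda>k. fin_cf a 0 (k + Suc n)) = (\<lambda>k. mobp a n (fin_cf a (Suc n) k))"
  proof
    fix k
    show "fin_cf a 0 (k + Suc n) = mobp a n (fin_cf a (Suc n) k)"
      using fin_cf_mobp[OF assms, of n "k + Suc n"] by simp
  qed
  have lim3: "(\<lambda>k. fin_cf a 0 (k + Suc n)) \<longlonglongrightarrow> cf_value a"
    using LIMSEQ_ignore_initial_segment[OF cf_conv[OF assms]] .
  have "cf_value a = mobp a n z"
    using LIMSEQ_unique[OF lim3] lim2 eq by simp
  then show ?thesis using ge unfolding z_def by simp
qed


definition St :: "(nat \<Rightarrow> nat) \<Rightarrow> nat \<Rightarrow> nat" where
  "St l j = (\<Sum>k<j. l k)"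

lemma bq_block:
  assumes l0: "\<And>n. l n > 0" and d: "1 \<le> d" "d \<le> l j"
  shows "block_quotients b l (St l j + d) = b j"
proof -
  have "(LEAST i. St l j + d \<le> (\<Sum>k\<le>i. l k)) = j"
  proof (rule Least_equality)
    show "St l j + d \<le> (\<Sum>k\<le>j. l k)" using d unfolding St_def
      by (simp add: lessThan_Suc_atMost[symmetric])
  next
    fix i assume h: "St l j + d \<le> (\<Sum>k\<le>i. l k)"
    show "j \<le> i"
    proof (rule ccontr)
      assume "\<not> j \<le> i"
      then have "Suc i \<le> j" by simp
      then have "(\<Sum>k<Suc i. l k) \<le> (\<Sum>k<j. l k)" by (intro sum_mono2) auto
      then have "(\<Sum>k\<le>i. l k) \<le> St l j" unfolding St_def by (simp add: lessThan_Suc_atMost)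
      then show False using h d by simp
    qed
  qed
  then show ?thesis unfolding block_quotients_def using d by simp
qed

lemma bq0: "block_quotients b l 0 = 0"
  unfolding block_quotients_def by simp

lemma bq_posq: "(\<And>n. b n > 0) \<Longrightarrow> posq (block_quotients b l)"
  unfolding posq_def block_quotients_def by (simp add: Suc_le_eq)

lemma St_Suc: "St l (Suc j) = St l j + l j"
  unfolding St_def by simp

lemma cq_block_lower:
  assumes l0: "\<And>n. l n > 0" and b0: "\<And>n. b n > 0" and d: "d \<le> l j"
  shows "cq (block_quotients b l) (Suc (St l j + d)) \<ge> b j ^ d"
  using d
proof (induction d)
  case 0
  then show ?case using cq_basic[OF bq_posq[OF b0], where n="St l j"] by simp
next
  case (Suc d)
  let ?a = "block_quotients b l"
  have "?a (Suc (St l j + d)) = b j" using bq_block[where d="Suc d" and j=j and b=b, OF l0] Suc.prems by simp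
  then have "cq ?a (Suc (St l j + Suc d)) \<ge> b j * cq ?a (Suc (St l j + d))"
    using cq_lower[of ?a "St l j + d"] by simp
  moreover have "b j * cq ?a (Suc (St l j + d)) \<ge> b j * b j ^ d"
    using Suc by (intro mult_left_mono) auto
  ultimately show ?case by (metis (no_types, lifting) order_trans power_Suc)
qed

lemma Rp_block:
  assumes l0: "\<And>n. l n > 0" and d: "d \<le> l j"
  shows "Rp (block_quotients b l) (Suc (St l j + d)) = Rp (block_quotients b l) (Suc (St l j)) * (b j + 1) ^ d"
  using d
proof (induction d)
  case 0 then show ?case by simp
next
  case (Suc d)
  let ?a = "block_quotients b l"
  have "?a (Suc (St l j + d)) = b j" using bq_block[where d="Suc d" and j=j and b=b, OF l0] Suc.prems by simp
  then have "Rp ?a (Suc (St l j + Suc d)) = (b j + 1) * Rp ?a (Suc (St l j + d))"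
    by (simp add: Rp_def)
  then show ?case using Suc by (simp add: algebra_simps)
qed

lemma Rp_ln:
  assumes l0: "\<And>n. l n > 0"
  shows "ln (real (Rp (block_quotients b l) (Suc (St l j)))) = (\<Sum>i<j. real (l i) * ln (real (b i) + 1))"
proof (induction j)
  case 0
  then show ?case by (simp add: St_def Rp_def bq0)
next
  case (Suc j)
  let ?a = "block_quotients b l"
  have pos: "real (Rp ?a (Suc (St l j))) > 0" using Rp_pos by simp
  have "Rp ?a (Suc (St l (Suc j))) = Rp ?a (Suc (St l j)) * (b j + 1) ^ l j"
    unfolding St_Suc by (rule Rp_block[OF l0]) simp
  then have "ln (real (Rp ?a (Suc (St l (Suc j))))) = ln (real (Rp ?a (Suc (St l j)))) + real (l j) * ln (real (b j) + 1)"
    using pos by (simp add: ln_mult ln_realpow add.commute)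
  then show ?case using Suc by simp
qed



lemma asym_E1:
  fixes b l :: "nat \<Rightarrow> nat"
  assumes b0: "\<And>n. b n > 0" and l0: "\<And>n. l n > 0"
    and bt: "filterlim (\<lambda>n. real (b n)) at_top sequentially"
    and rt: "filterlim (\<lambda>n. ln (real (b (Suc n))) / (\<Sum>k\<le>n. real (l k) * ln (real (b k))))
           at_top sequentially"
    and w: "w \<ge> 0"
  shows "\<forall>\<^sub>F j in sequentially.
     ln (real (b (Suc j))) \<ge> w * (\<Sum>i<Suc j. real (l i) * ln (real (b i) + 1)) + C"
proof -
  define T where "T j = (\<Sum>k\<le>j. real (l k) * ln (real (b k)))" for j
  define U where "U j = (\<Sum>i<Suc j. real (l i) * ln (real (b i) + 1))" for j
  have ev2: "\<forall>\<^sub>F i in sequentially. real (b i) \<ge> 2"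
    using filterlim_at_top[THEN iffD1, rule_format, OF bt, of 2] .
  then obtain i0 where i0: "\<And>i. i \<ge> i0 \<Longrightarrow> real (b i) \<ge> 2"
    by (auto simp: eventually_sequentially)
  define C0 where "C0 = U i0 - 2 * T i0"
  have UT: "U j \<le> 2 * T j + C0" if "j \<ge> i0" for j
    using that
  proof (induction j rule: dec_induct)
    case base then show ?case by (simp add: C0_def)
  next
    case (step j)
    have bj: "real (b (Suc j)) \<ge> 2" using i0 step.hyps(1) by simp
    have "ln (real (b (Suc j)) + 1) \<le> ln (real (b (Suc j)) * real (b (Suc j)))"
    proof -
      have "2 * real (b (Suc j)) \<le> real (b (Suc j)) * real (b (Suc j))"
        using bj by (intro mult_right_mono) auto
      then have "real (b (Suc j)) + 1 \<le> real (b (Suc j)) * real (b (Suc j))" using bj by linarith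
      moreover have "real (b (Suc j)) + 1 > 0" by simp
      ultimately show ?thesis by (subst ln_le_cancel_iff) auto
    qed
    also have "\<dots> = 2 * ln (real (b (Suc j)))" using bj by (simp add: ln_mult)
    finally have "real (l (Suc j)) * ln (real (b (Suc j)) + 1) \<le> real (l (Suc j)) * (2 * ln (real (b (Suc j))))"
      by (intro mult_left_mono) auto
    moreover have "U (Suc j) = U j + real (l (Suc j)) * ln (real (b (Suc j)) + 1)"
      unfolding U_def by simp
    moreover have "T (Suc j) = T j + real (l (Suc j)) * ln (real (b (Suc j)))"
      unfolding T_def by simp
    ultimately show ?case using step.IH by (simp add: algebra_simps)
  qed
  have lnb: "filterlim (\<lambda>n. ln (real (b n))) at_top sequentially"
    using filterlim_compose[OF ln_at_top bt] by (simp add: o_def)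
  have Tge: "T j \<ge> ln (real (b j))" for j
  proof -
    have nn: "\<And>k. 0 \<le> real (l k) * ln (real (b k))" using b0 by (simp add: Suc_le_eq)
    have "real (l j) * ln (real (b j)) \<le> T j"
      unfolding T_def by (rule member_le_sum[where f="\<lambda>k. real (l k) * ln (real (b k))"]) (use nn in auto)
    moreover have "ln (real (b j)) \<le> real (l j) * ln (real (b j))"
      using l0[of j] b0[of j] by (simp add: Suc_le_eq mult_le_cancel_right1)
    ultimately show ?thesis by linarith
  qed
  have Tt: "filterlim T at_top sequentially"
    by (rule filterlim_at_top_mono[OF lnb]) (simp add: Tge)
  have e1: "\<forall>\<^sub>F j in sequentially. T j \<ge> max 1 (w * C0 + C)"
    using filterlim_at_top[THEN iffD1, rule_format, OF Tt] .
  have e2: "\<forall>\<^sub>F j in sequentially. ln (real (b (Suc j))) / T j \<ge> 2 * w + 1"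
    using filterlim_at_top[THEN iffD1, rule_format, OF rt] unfolding T_def .
  have e3: "\<forall>\<^sub>F j in sequentially. j \<ge> i0" by (rule eventually_ge_at_top)
  show ?thesis
  proof (rule eventually_mono[OF eventually_conj[OF e1 eventually_conj[OF e2 e3]]])
    fix j assume h: "T j \<ge> max 1 (w * C0 + C) \<and> ln (real (b (Suc j))) / T j \<ge> 2 * w + 1 \<and> j \<ge> i0"
    have Tp: "T j > 0" using h by linarith
    have "ln (real (b (Suc j))) \<ge> (2 * w + 1) * T j" using h Tp by (simp add: le_divide_eq)
    moreover have "w * U j \<le> w * (2 * T j + C0)" using UT[of j] h w by (intro mult_left_mono) auto
    ultimately have "ln (real (b (Suc j))) \<ge> w * U j + C" using h by (simp add: algebra_simps)
    then show "ln (real (b (Suc j))) \<ge> w * (\<Sum>i<Suc j. real (l i) * ln (real (b i) + 1)) + C"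
      unfolding U_def .
  qed
qed


lemma Usum_ge:
  fixes b l :: "nat \<Rightarrow> nat"
  assumes "\<And>n. l n > 0"
  shows "(\<Sum>i<Suc j. real (l i) * ln (real (b i) + 1)) \<ge> ln (real (b j) + 1)"
    and "(\<Sum>i<Suc j. real (l i) * ln (real (b i) + 1)) \<ge> 0"
proof -
  have nn: "\<And>k. 0 \<le> real (l k) * ln (real (b k) + 1)" by simp
  have "real (l j) * ln (real (b j) + 1) \<le> (\<Sum>i<Suc j. real (l i) * ln (real (b i) + 1))"
    by (rule member_le_sum[where f="\<lambda>k. real (l k) * ln (real (b k) + 1)"]) (use nn in auto)
  moreover have "ln (real (b j) + 1) \<le> real (l j) * ln (real (b j) + 1)"
    using assms[of j] by (simp add: Suc_le_eq mult_le_cancel_right1)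
  ultimately show "(\<Sum>i<Suc j. real (l i) * ln (real (b i) + 1)) \<ge> ln (real (b j) + 1)" by linarith
  show "(\<Sum>i<Suc j. real (l i) * ln (real (b i) + 1)) \<ge> 0" by (rule sum_nonneg) (use nn in auto)
qed

lemma asym_E2:
  fixes b l :: "nat \<Rightarrow> nat"
  assumes b0: "\<And>n. b n > 0" and l0: "\<And>n. l n > 0"
    and bt: "filterlim (\<lambda>n. real (b n)) at_top sequentially"
    and lt: "filterlim (\<lambda>n. real (l n)) at_top sequentially"
    and rt: "filterlim (\<lambda>n. ln (real (b (Suc n))) / (\<Sum>k\<le>n. real (l k) * ln (real (b k))))
           at_top sequentially"
    and w: "w \<ge> 0"
  shows "\<forall>\<^sub>F j in sequentially.
     2 * real (l (Suc j)) * ln (real (b (Suc j))) \<ge>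
       w * (ln 4 + ln (real (b (Suc j)) + 1) + 2 * (\<Sum>i<Suc j. real (l i) * ln (real (b i) + 1))) + C"
proof -
  have e1: "\<forall>\<^sub>F j in sequentially. ln (real (b (Suc j))) \<ge> 1 * (\<Sum>i<Suc j. real (l i) * ln (real (b i) + 1)) + 0"
    by (rule asym_E1[OF b0 l0 bt rt]) simp
  have bt': "filterlim (\<lambda>n. real (b (Suc n))) at_top sequentially"
    using filterlim_compose[OF bt filterlim_Suc] by (simp add: o_def)
  have lnb: "filterlim (\<lambda>n. ln (real (b (Suc n)))) at_top sequentially"
    using filterlim_compose[OF ln_at_top bt'] by (simp add: o_def)
  have e2: "\<forall>\<^sub>F j in sequentially. ln (real (b (Suc j))) \<ge> max (ln 8) \<bar>C\<bar>"
    using filterlim_at_top[THEN iffD1, rule_format, OF lnb] .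
  have lt': "filterlim (\<lambda>n. real (l (Suc n))) at_top sequentially"
    using filterlim_compose[OF lt filterlim_Suc] by (simp add: o_def)
  have e3: "\<forall>\<^sub>F j in sequentially. real (l (Suc j)) \<ge> 2 * w + 1"
    using filterlim_at_top[THEN iffD1, rule_format, OF lt'] .
  show ?thesis
  proof (rule eventually_mono[OF eventually_conj[OF e1 eventually_conj[OF e2 e3]]])
    fix j
    define L where "L = ln (real (b (Suc j)))"
    define U where "U = (\<Sum>i<Suc j. real (l i) * ln (real (b i) + 1))"
    assume h: "ln (real (b (Suc j))) \<ge> 1 * (\<Sum>i<Suc j. real (l i) * ln (real (b i) + 1)) + 0 \<and>
       ln (real (b (Suc j))) \<ge> max (ln 8) \<bar>C\<bar> \<and> real (l (Suc j)) \<ge> 2 * w + 1"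
    then have hU: "U \<le> L" and h8: "L \<ge> ln 8" and hC: "L \<ge> \<bar>C\<bar>" and hl: "real (l (Suc j)) \<ge> 2 * w + 1"
      unfolding L_def U_def by auto
    have bpos: "real (b (Suc j)) \<ge> 1" using b0[of "Suc j"] by (simp add: Suc_le_eq)
    have "ln (real (b (Suc j)) + 1) \<le> ln (2 * real (b (Suc j)))"
      using bpos by (subst ln_le_cancel_iff) auto
    also have "\<dots> = ln 2 + L" unfolding L_def using bpos by (simp add: ln_mult)
    finally have h1: "ln (real (b (Suc j)) + 1) \<le> ln 2 + L" .
    have "ln (4::real) + ln 2 = ln (4 * 2)"
      by (subst ln_mult) auto
    then have "ln (4::real) + ln 2 = ln 8" by simp
    then have "ln 4 + ln (real (b (Suc j)) + 1) + 2 * U \<le> 4 * L" using h1 hU h8 by linarith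
    then have "w * (ln 4 + ln (real (b (Suc j)) + 1) + 2 * U) \<le> w * (4 * L)"
      using w by (intro mult_left_mono) auto
    moreover have "L \<ge> 0"
    proof -
      have "ln (8::real) > 0" by simp
      then show ?thesis using h8 by linarith
    qed
    moreover have "2 * real (l (Suc j)) * L \<ge> 2 * (2 * w + 1) * L"
      using hl \<open>L \<ge> 0\<close> by (intro mult_right_mono) auto
    ultimately show "2 * real (l (Suc j)) * ln (real (b (Suc j))) \<ge>
       w * (ln 4 + ln (real (b (Suc j)) + 1) + 2 * (\<Sum>i<Suc j. real (l i) * ln (real (b i) + 1))) + C"
      unfolding L_def[symmetric] U_def[symmetric] using hC by (simp add: algebra_simps)
  qed
qed

lemma asym_E3:
  fixes b l :: "nat \<Rightarrow> nat"
  assumes b0: "\<And>n. b n > 0" and l0: "\<And>n. l n > 0"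
    and bt: "filterlim (\<lambda>n. real (b n)) at_top sequentially"
    and rt: "filterlim (\<lambda>n. ln (real (b (Suc n))) / (\<Sum>k\<le>n. real (l k) * ln (real (b k))))
           at_top sequentially"
  shows "\<forall>\<^sub>F j in sequentially. real (b (Suc (Suc j))) > real (b (Suc j)) + 1"
proof -
  have e1: "\<forall>\<^sub>F j in sequentially. ln (real (b (Suc j))) \<ge> 1 * (\<Sum>i<Suc j. real (l i) * ln (real (b i) + 1)) + 1"
    by (rule asym_E1[OF b0 l0 bt rt]) simp
  then have e1': "\<forall>\<^sub>F j in sequentially. ln (real (b (Suc (Suc j)))) \<ge> 1 * (\<Sum>i<Suc (Suc j). real (l i) * ln (real (b i) + 1)) + 1"
  proof -
    from e1 obtain N where "\<And>j. j \<ge> N \<Longrightarrow> ln (real (b (Suc j))) \<ge> 1 * (\<Sum>i<Suc j. real (l i) * ln (real (b i) + 1)) + 1"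
      by (auto simp: eventually_sequentially)
    then show ?thesis unfolding eventually_sequentially
      by (intro exI[of _ N] allI impI) (metis le_SucI)
  qed
  show ?thesis
  proof (rule eventually_mono[OF e1'])
    fix j
    assume h: "ln (real (b (Suc (Suc j)))) \<ge> 1 * (\<Sum>i<Suc (Suc j). real (l i) * ln (real (b i) + 1)) + 1"
    have "ln (real (b (Suc (Suc j)))) > ln (real (b (Suc j)) + 1)"
      using h Usum_ge(1)[of l b "Suc j", OF l0] by simp
    moreover have "real (b (Suc (Suc j))) > 0" using b0 by simp
    ultimately show "real (b (Suc (Suc j))) > real (b (Suc j)) + 1"
      by (subst (asm) ln_less_cancel_iff) auto
  qed
qed



lemma map_poly_of_int_mult:
  "map_poly (of_int :: int \<Rightarrow> real) (f * g) = map_poly of_int f * map_poly of_int g"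
  by (rule poly_eqI) (simp add: coeff_mult coeff_map_poly)

lemma height_le:
  assumes "\<And>i. \<bar>coeff P i\<bar> \<le> B"
  shows "height P \<le> B"
  unfolding height_def using assms by (subst Max_le_iff) auto

lemma coeff_le_height: "\<bar>coeff P i\<bar> \<le> height P"
proof (cases "i \<le> degree P")
  case True
  then show ?thesis unfolding height_def by (intro Max_ge) auto
next
  case False
  then have "coeff P i = 0" by (simp add: coeff_eq_0)
  moreover have "\<bar>coeff P 0\<bar> \<le> height P" unfolding height_def by (intro Max_ge) auto
  ultimately show ?thesis by simp
qed

lemma height_pos: "P \<noteq> 0 \<Longrightarrow> height P \<ge> 1"
  using coeff_le_height[of P "degree P"] leading_coeff_neq_0[of P] by linarith

lemma lin_root_rat:
  fixes P :: "int poly"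
  assumes "P \<noteq> 0" "degree P \<le> 1" "poly (map_poly real_of_int P) x = 0"
  shows "x \<in> \<rat>"
proof -
  have P: "P = [:coeff P 0, coeff P 1:]"
    using assms(2) by (intro poly_eqI) (auto simp: coeff_pCons coeff_eq_0 split: nat.splits)
  have e: "real_of_int (coeff P 0) + real_of_int (coeff P 1) * x = 0"
    using assms(3) by (subst (asm) P) (auto simp: map_poly_pCons mult.commute split: if_splits)
  show ?thesis
  proof (cases "coeff P 1 = 0")
    case True
    then have "coeff P 0 = 0" using e by simp
    then have "P = 0" using True P by simp
    then show ?thesis using assms(1) by simp
  next
    case False
    then have "x = - real_of_int (coeff P 0) / real_of_int (coeff P 1)" using e by (simp add: field_simps)
    then show ?thesis by simp
  qed
qed

lemma irreducible_quad:
  fixes P :: "int poly"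
  assumes c: "content P = 1" and d: "degree P = 2"
    and r: "poly (map_poly real_of_int P) \<alpha> = 0" and irr: "\<alpha> \<notin> \<rat>"
  shows "irreducible P"
proof (rule irreducibleI)
  show P0: "P \<noteq> 0" using d by auto
  show "\<not> P dvd 1" using d by (auto simp: is_unit_poly_iff)
  fix f g assume fg: "P = f * g"
  then have f0: "f \<noteq> 0" and g0: "g \<noteq> 0" using P0 by auto
  have dd: "degree f + degree g = 2" using fg d degree_mult_eq[OF f0 g0] by simp
  have const_unit: "h dvd 1" if "degree h = 0" "h dvd P" for h
  proof -
    have "h = [:coeff h 0:]" using that(1) by (rule degree_0_id[symmetric])
    then have "coeff h 0 dvd content P" using that(2) const_poly_dvd_iff_dvd_content by metis
    then have "coeff h 0 dvd 1" using c by simp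
    then show ?thesis using \<open>h = [:coeff h 0:]\<close> by (metis is_unit_const_poly_iff)
  qed
  show "f dvd 1 \<or> g dvd 1"
  proof (cases "degree f = 0")
    case True then show ?thesis using const_unit[of f] fg by auto
  next
    case False
    show ?thesis
    proof (cases "degree g = 0")
      case True then show ?thesis using const_unit[of g] fg by auto
    next
      case False
      with \<open>degree f \<noteq> 0\<close> dd have "degree f = 1" "degree g = 1" by auto
      have "poly (map_poly real_of_int f) \<alpha> * poly (map_poly real_of_int g) \<alpha> = 0"
        using r fg by (simp add: map_poly_of_int_mult)
      then have "\<alpha> \<in> \<rat>"
        using lin_root_rat[OF f0] lin_root_rat[OF g0] \<open>degree f = 1\<close> \<open>degree g = 1\<close> by auto
      then show ?thesis using irr by simp
    qed
  qed
qed


definition beta :: "nat \<Rightarrow> real" where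
  "beta c = (real c + sqrt (real c ^ 2 + 4)) / 2"

lemma sqrt_bounds:
  fixes c :: nat
  assumes "c \<ge> 1"
  shows "sqrt (real c ^ 2 + 4) > real c" "sqrt (real c ^ 2 + 4) < real c + 2"
    "sqrt (real c ^ 2 + 4) \<ge> 2"
proof -
  have "sqrt (real c ^ 2) < sqrt (real c ^ 2 + 4)" by (subst real_sqrt_less_iff) simp
  then show "sqrt (real c ^ 2 + 4) > real c" by simp
  have "sqrt (real c ^ 2 + 4) < sqrt ((real c + 2) ^ 2)"
    using assms by (subst real_sqrt_less_iff) (simp add: power2_eq_square algebra_simps)
  then show "sqrt (real c ^ 2 + 4) < real c + 2" by simp
  have "sqrt 4 \<le> sqrt (real c ^ 2 + 4)" by (subst real_sqrt_le_iff) simp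
  moreover have "sqrt (4::real) = 2" by (simp add: real_sqrt_unique[of 2] power2_eq_square)
  ultimately show "sqrt (real c ^ 2 + 4) \<ge> 2" by simp
qed

lemma beta_props:
  fixes c :: nat
  assumes "c \<ge> 1"
  shows "beta c ^ 2 - real c * beta c - 1 = 0" "beta c > real c" "beta c < real c + 1"
    "beta c \<ge> 1" "beta c = real c + 1 / beta c"
proof -
  note sb = sqrt_bounds[OF assms]
  have sq: "sqrt (real c ^ 2 + 4) ^ 2 = real c ^ 2 + 4" by simp
  show e: "beta c ^ 2 - real c * beta c - 1 = 0"
    unfolding beta_def using sq by (simp add: power2_eq_square field_simps)
  show "beta c > real c" "beta c < real c + 1" "beta c \<ge> 1"
    unfolding beta_def using sb assms by auto
  then have "beta c \<noteq> 0" by auto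
  then show "beta c = real c + 1 / beta c" using e
    by (simp add: field_simps power2_eq_square)
qed

lemma beta_unique:
  fixes c :: nat and y :: real
  assumes "c \<ge> 1" "y > 0" "y ^ 2 - real c * y - 1 = 0"
  shows "y = beta c"
proof -
  have "(2 * y - real c) ^ 2 = real c ^ 2 + 4" using assms(3)
    by (simp add: power2_eq_square algebra_simps)
  then have "\<bar>2 * y - real c\<bar> = sqrt (real c ^ 2 + 4)"
    by (metis real_sqrt_abs)
  moreover have "sqrt (real c ^ 2 + 4) > real c" using sqrt_bounds[OF assms(1)] by simp
  ultimately have "2 * y - real c = sqrt (real c ^ 2 + 4)" using assms(2) by (auto simp: abs_if split: if_splits)
  then show ?thesis unfolding beta_def by simp
qed

lemma beta_irrat:
  fixes c :: nat
  assumes "c \<ge> 1"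
  shows "beta c \<notin> \<rat>"
proof
  assume "beta c \<in> \<rat>"
  then obtain r s :: int where s: "s > 0" "coprime r s" and bq: "beta c = of_int r / of_int s"
    using Rats_cases' by blast
  note bp = beta_props[OF assms]
  have "(of_int r / of_int s) ^ 2 - real c * (of_int r / of_int s) - 1 = 0" using bp(1) bq by simp
  then have "real_of_int r ^ 2 = real c * of_int r * of_int s + of_int s ^ 2"
    using s by (simp add: field_simps power2_eq_square)
  then have "real_of_int (r ^ 2) = real_of_int (int c * r * s + s ^ 2)" by simp
  then have "r ^ 2 = int c * r * s + s ^ 2" by (simp only: of_int_eq_iff)
  then have "r ^ 2 = s * (int c * r + s)" by (simp add: algebra_simps power2_eq_square)
  then have "s dvd r ^ 2" by simp
  moreover have "coprime (r ^ 2) s" using s(2) by simp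
  ultimately have "is_unit s" by (meson coprime_common_divisor dvd_refl)
  then have "s = 1" using s(1) by auto
  then have "beta c = of_int r" using bq by simp
  then have "real c < of_int r" "of_int r < real c + 1" using bp by auto
  then have "int c < r" "r < int c + 1" by linarith+
  then show False by simp
qed


lemma map3: "map_poly real_of_int [:a0, a1, a2:] = [:real_of_int a0, real_of_int a1, real_of_int a2:]"
  by (rule poly_eqI) (simp add: coeff_map_poly coeff_pCons split: nat.splits)

lemma poly3: "poly (map_poly real_of_int [:a0, a1, a2:]) x = a0 + a1 * x + a2 * x ^ 2"
  unfolding map3 by (simp add: algebra_simps power2_eq_square)

definition qpoly :: "int \<Rightarrow> int \<Rightarrow> int \<Rightarrow> int \<Rightarrow> int \<Rightarrow> int poly" where
  "qpoly c p p' q q' = [: p'^2 + c * p' * p - p^2, - 2 * p' * q' - c * (q' * p + p' * q) + 2 * p * q,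
                         q'^2 + c * q' * q - q^2 :]"

lemma qpoly_eval:
  "poly (map_poly real_of_int (qpoly c p p' q q')) x =
     (q' * x - p')^2 + c * (q' * x - p') * (q * x - p) - (q * x - p)^2"
  unfolding qpoly_def poly3 by (simp add: algebra_simps power2_eq_square)

lemma qpoly_mob:
  fixes y :: real
  assumes "\<bar>real_of_int p * q' - real_of_int p' * q\<bar> = 1" "real_of_int q * y + q' \<noteq> 0"
  shows "poly (map_poly real_of_int (qpoly c p p' q q')) ((p * y + p') / (q * y + q'))
           = (y^2 - c * y - 1) / (q * y + q')^2"
proof -
  define e where "e = real_of_int p * q' - real_of_int p' * q"
  define D where "D = real_of_int q * y + q'"
  have e2: "e^2 = 1" using assms(1) unfolding e_def by (metis abs_power2 power2_abs power_one abs_1 one_power2)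
  have D: "D \<noteq> 0" using assms(2) unfolding D_def .
  have h1: "real_of_int q' * ((p * y + p') / D) - p' = e * y / D"
    using D unfolding e_def D_def by (simp add: field_simps)
  have h2: "real_of_int q * ((p * y + p') / D) - p = - e / D"
    using D unfolding e_def D_def by (simp add: field_simps)
  have "poly (map_poly real_of_int (qpoly c p p' q q')) ((p * y + p') / D)
      = (e * y / D)^2 + c * (e * y / D) * (- e / D) - (- e / D)^2"
    unfolding qpoly_eval h1 h2 ..
  also have "\<dots> = e^2 * (y^2 - c * y - 1) / D^2"
    using D by (simp add: field_simps power2_eq_square)
  also have "\<dots> = (y^2 - c * y - 1) / D^2" using e2 by simp
  finally show ?thesis unfolding D_def .
qed

lemma qpoly_height:
  assumes "0 \<le> p" "p \<le> R" "0 \<le> p'" "p' \<le> R" "0 \<le> q" "q \<le> R" "0 \<le> q'" "q' \<le> R" "c \<ge> 0"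
  shows "height (qpoly c p p' q q') \<le> 4 * (c + 1) * R^2"
proof (rule height_le)
  fix i
  have R0: "R \<ge> 0" using assms by linarith
  have pp: "p * p' \<le> R^2" "p * p \<le> R^2" "p' * p' \<le> R^2" "q * q' \<le> R^2" "q * q \<le> R^2" "q' * q' \<le> R^2"
    "q' * p \<le> R^2" "p' * q \<le> R^2" "p' * q' \<le> R^2" "p * q \<le> R^2"
    using assms by (simp_all add: power2_eq_square mult_mono)
  have nn: "0 \<le> p * p'" "0 \<le> p * p" "0 \<le> p' * p'" "0 \<le> q * q'" "0 \<le> q * q" "0 \<le> q' * q'"
    "0 \<le> q' * p" "0 \<le> p' * q" "0 \<le> p' * q'" "0 \<le> p * q"
    using assms by simp_all
  have cR: "c * (p * p') \<le> c * R^2" "c * (q * q') \<le> c * R^2" "c * (q' * p + p' * q) \<le> c * (2 * R^2)"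
    using pp assms(9) by (simp_all add: mult_left_mono)
  have cn: "0 \<le> c * (p * p')" "0 \<le> c * (q * q')" "0 \<le> c * (q' * p + p' * q)"
    using nn assms(9) by simp_all
  have R2: "R^2 \<ge> 0" by simp
  have E: "4 * (c + 1) * R^2 = 4 * (c * R^2) + 4 * R^2" by (simp add: algebra_simps)
  have s1: "p'^2 \<le> R^2" "p^2 \<le> R^2" "q'^2 \<le> R^2" "q^2 \<le> R^2"
    using pp by (simp_all add: power2_eq_square)
  have s0: "0 \<le> p'^2" "0 \<le> p^2" "0 \<le> q'^2" "0 \<le> q^2" by simp_all
  have m1: "c * p' * p \<le> c * R^2" "0 \<le> c * p' * p" "c * q' * q \<le> c * R^2" "0 \<le> c * q' * q"
    using cR cn by (simp_all add: mult.assoc mult.commute[of p p'] mult.commute[of q q'])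
  have cR0: "0 \<le> c * R^2" using assms(9) by simp
  have c0: "\<bar>p'^2 + c * p' * p - p^2\<bar> \<le> 4 * (c + 1) * R^2"
    unfolding E abs_le_iff using s1 s0 m1 cR0 by linarith
  have c2: "\<bar>q'^2 + c * q' * q - q^2\<bar> \<le> 4 * (c + 1) * R^2"
    unfolding E abs_le_iff using s1 s0 m1 cR0 by linarith
  have c1: "\<bar>- 2 * p' * q' - c * (q' * p + p' * q) + 2 * p * q\<bar> \<le> 4 * (c + 1) * R^2"
  proof -
    have "2 * p' * q' = 2 * (p' * q')" "2 * p * q = 2 * (p * q)" by simp_all
    then show ?thesis unfolding E abs_le_iff using pp nn cR cn cR0 by linarith
  qed
  have z: "0 \<le> 4 * (c + 1) * R^2" using assms(9) by simp
  show "\<bar>coeff (qpoly c p p' q q') i\<bar> \<le> 4 * (c + 1) * R^2"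
    unfolding qpoly_def using c0 c1 c2 z by (auto simp: coeff_pCons split: nat.splits)
qed

lemma deg2_diff:
  fixes P :: "int poly" and x y :: real
  assumes "degree P \<le> 2" "\<bar>x\<bar> \<le> 1" "\<bar>y\<bar> \<le> 1"
  shows "\<bar>poly (map_poly real_of_int P) x - poly (map_poly real_of_int P) y\<bar> \<le> 3 * height P * \<bar>x - y\<bar>"
proof -
  have P: "P = [:coeff P 0, coeff P 1, coeff P 2:]"
    using assms(1) by (intro poly_eqI) (auto simp: coeff_pCons coeff_eq_0 numeral_2_eq_2 split: nat.splits)
  define A where "A = real_of_int (coeff P 2)"
  define B where "B = real_of_int (coeff P 1)"
  define H where "H = real_of_int (height P)"
  have A: "\<bar>A\<bar> \<le> H" unfolding A_def H_def using coeff_le_height[of P 2] by linarith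
  have B: "\<bar>B\<bar> \<le> H" unfolding B_def H_def using coeff_le_height[of P 1] by linarith
  have "poly (map_poly real_of_int P) x - poly (map_poly real_of_int P) y = (x - y) * (B + A * (x + y))"
    by (subst (1 2) P, unfold poly3) (simp add: A_def B_def algebra_simps power2_eq_square)
  also have "\<bar>\<dots>\<bar> = \<bar>x - y\<bar> * \<bar>B + A * (x + y)\<bar>" by (simp add: abs_mult)
  also have "\<bar>B + A * (x + y)\<bar> \<le> 3 * H"
  proof -
    have "\<bar>A * (x + y)\<bar> \<le> H * 2"
      unfolding abs_mult using A assms(2,3) by (intro mult_mono) auto
    then show ?thesis using B by linarith
  qed
  then have "\<bar>x - y\<bar> * \<bar>B + A * (x + y)\<bar> \<le> \<bar>x - y\<bar> * (3 * H)" by (intro mult_left_mono) auto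
  finally show ?thesis unfolding H_def by (simp add: algebra_simps)
qed



lemma ereal_sup_inf:
  assumes "\<And>w. w \<ge> 0 \<Longrightarrow> Pw w"
  shows "Sup {ereal w | w. Pw w} = \<infinity>"
proof (rule ereal_top)
  fix B
  have "Pw (max B 0)" using assms by simp
  then have "ereal (max B 0) \<in> {ereal w | w. Pw w}" by blast
  then have "ereal (max B 0) \<le> Sup {ereal w | w. Pw w}" by (rule Sup_upper)
  moreover have "ereal B \<le> ereal (max B 0)" by simp
  ultimately show "ereal B \<le> Sup {ereal w | w. Pw w}" by (rule order_trans[rotated])
qed

lemma mobp_cfx: "posq a \<Longrightarrow> x > 0 \<Longrightarrow> mobp a n x = cfx a n x"
  unfolding mobp_def by (simp add: cfx_closed)

lemma mobp_unit:
  assumes "posq a" "a 0 = 0" "n \<ge> 1" "x > 0"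
  shows "0 < mobp a n x \<and> mobp a n x \<le> 1"
proof -
  obtain n' where n: "n = Suc n'" using assms(3) by (cases n) auto
  have "cfx (\<lambda>i. a (Suc i)) n' x > real (a 1)" using cfx_gt[OF assms(4)] by simp
  moreover have "real (a 1) \<ge> 1" using assms(1) unfolding posq_def by simp
  ultimately have g: "cfx (\<lambda>i. a (Suc i)) n' x > 1" by linarith
  have "mobp a n x = 1 / cfx (\<lambda>i. a (Suc i)) n' x"
    using mobp_cfx[OF assms(1,4)] n assms(2) by simp
  then show ?thesis using g by simp
qed

lemma cfx_fixed:
  assumes "posq a" "\<And>d. 1 \<le> d \<Longrightarrow> d \<le> L \<Longrightarrow> a (M + d) = c" "\<beta> > 0" "\<beta> = real c + 1 / \<beta>" "d \<le> L"
  shows "cfx a (M + d) \<beta> = cfx a M \<beta>"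
  using assms(5)
proof (induction d)
  case 0 then show ?case by simp
next
  case (Suc d)
  have "cfx a (M + Suc d) \<beta> = cfx a (M + d) (real (a (Suc (M + d))) + 1 / \<beta>)"
    using cfx_Suc_last[of a "M + d" \<beta>] by simp
  also have "a (Suc (M + d)) = c" using assms(2)[of "Suc d"] Suc.prems by simp
  also have "real c + 1 / \<beta> = \<beta>" using assms(4) by simp
  finally show ?case using Suc by simp
qed

lemma map_poly_smult_int:
  "map_poly (real_of_int) (smult k P) = smult (real_of_int k) (map_poly real_of_int P)"
  by (rule poly_eqI) (simp add: coeff_map_poly)

lemma content_int_nonneg: "content (P :: int poly) \<ge> 0"
proof -
  have "\<bar>content P\<bar> = content P" using normalize_content[of P] unfolding normalize_int_def .
  then show ?thesis by (metis abs_ge_zero)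
qed


lemma map2: "map_poly real_of_int [:a0, a1:] = [:real_of_int a0, real_of_int a1:]"
  by (rule poly_eqI) (simp add: coeff_map_poly coeff_pCons split: nat.splits)

lemma ev_obtain: "eventually P sequentially \<Longrightarrow> \<exists>j. P j"
  by (auto simp: eventually_sequentially)

lemma powr_bound:
  fixes H w B L :: real
  assumes "H \<ge> 1" "B > 0" "w \<ge> 0" "ln H \<le> L" "w * L \<le> ln B"
  shows "1 / B \<le> H powr (- w)"
proof -
  have "w * ln H \<le> w * L" using assms by (intro mult_left_mono) auto
  then have "H powr w \<le> B" using assms
    by (metis exp_ln exp_le_cancel_iff order_trans powr_def mult.commute not_one_le_zero)
  moreover have "H powr w > 0" using assms by simp
  ultimately have "1 / B \<le> 1 / H powr w"
    using assms(2) by (intro divide_left_mono) auto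
  then show ?thesis by (simp add: powr_minus_divide)
qed

lemma liou_part:
  fixes b l :: "nat \<Rightarrow> nat"
  assumes b0: "\<And>n. b n > 0" and l0: "\<And>n. l n > 0"
    and bt: "filterlim (\<lambda>n. real (b n)) at_top sequentially"
    and rt: "filterlim (\<lambda>n. ln (real (b (Suc n))) / (\<Sum>k\<le>n. real (l k) * ln (real (b k))))
           at_top sequentially"
    and w: "w \<ge> 0"
  shows "\<forall>H0. \<exists>H::real. H > H0 \<and>
      (\<exists>P::int poly. degree P \<le> 1 \<and> real_of_int (height P) \<le> H \<and>
          0 < \<bar>poly (map_poly real_of_int P) (xi_bl b l)\<bar> \<and> \<bar>poly (map_poly real_of_int P) (xi_bl b l)\<bar> \<le> H powr (-w))"
proof
  fix H0 :: real
  define a where "a = block_quotients b l"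
  have pa: "posq a" unfolding a_def by (rule bq_posq[OF b0])
  define C where "C = w * ln (\<bar>H0\<bar> + 1)"
  obtain j where hj: "ln (real (b (Suc j))) \<ge> w * (\<Sum>i<Suc j. real (l i) * ln (real (b i) + 1)) + C"
    using ev_obtain[OF asym_E1[OF b0 l0 bt rt w, of C]] by blast
  define U where "U = (\<Sum>i<Suc j. real (l i) * ln (real (b i) + 1))"
  define N where "N = St l (Suc j)"
  have aN: "a (Suc N) = b (Suc j)"
    using bq_block[where d=1 and j="Suc j" and b=b, OF l0] l0[of "Suc j"] unfolding a_def N_def by simp
  define z where "z = cf_value (\<lambda>i. a (Suc N + i))"
  have xi: "xi_bl b l = mobp a N z" and zb: "z \<ge> real (b (Suc j))"
    using cf_tail[OF pa, of N] aN unfolding z_def xi_bl_def a_def by auto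
  have bpos: "real (b (Suc j)) \<ge> 1" using b0[of "Suc j"] by (simp add: Suc_le_eq)
  have z1: "z \<ge> 1" using zb bpos by linarith
  define p where "p = cp a (Suc N)"
  define p' where "p' = cp a N"
  define q where "q = cq a (Suc N)"
  define q' where "q' = cq a N"
  have q1: "real q \<ge> 1" unfolding q_def using cq_basic[OF pa, of N] by simp
  define D where "D = real q * z + real q'"
  have "real q * z \<ge> 1 * z" using q1 z1 by (intro mult_right_mono) auto
  then have Dz: "D \<ge> z" unfolding D_def by simp
  have D0: "D > 0" using Dz z1 by linarith
  have det: "\<bar>real p * real q' - real p' * real q\<bar> = 1" unfolding p_def q_def p'_def q'_def by (rule det_abs)
  define P :: "int poly" where "P = [: - int p, int q :]"
  have evalP: "poly (map_poly real_of_int P) x = real q * x - real p" for x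
    unfolding P_def map2 by simp
  have "poly (map_poly real_of_int P) (xi_bl b l) = real q * ((real p * z + real p') / D) - real p"
    unfolding evalP xi mobp_def D_def p_def q_def p'_def q'_def ..
  also have "\<dots> = (real q * real p' - real p * real q') / D"
    using D0 unfolding D_def by (simp add: field_simps)
  finally have val: "\<bar>poly (map_poly real_of_int P) (xi_bl b l)\<bar> = 1 / D"
    using det D0 by (simp add: abs_divide) (simp add: abs_minus_commute algebra_simps)
  have up: "1 / D \<le> 1 / real (b (Suc j))"
    using Dz zb bpos by (intro divide_left_mono) auto
  define R where "R = real (Rp a (Suc N))"
  have R1: "R \<ge> 1" unfolding R_def using Rp_pos[of a "Suc N"] by simp
  have lnR: "ln R = U" unfolding R_def U_def a_def N_def by (rule Rp_ln[OF l0])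
  have pR: "real p \<le> R" "real q \<le> R" unfolding R_def p_def q_def using cpq_le_Rp[of a "Suc N"] by auto
  have hP: "real_of_int (height P) \<le> R"
  proof -
    have "height P \<le> int (Rp a (Suc N))"
    proof (rule height_le)
      fix i show "\<bar>coeff P i\<bar> \<le> int (Rp a (Suc N))"
        using pR unfolding P_def R_def by (auto simp: coeff_pCons split: nat.splits)
    qed
    then show ?thesis unfolding R_def by linarith
  qed
  define H where "H = max R (\<bar>H0\<bar> + 1)"
  have H1: "H \<ge> 1" and HH0: "H > H0" unfolding H_def using R1 by auto
  have "H \<le> R * (\<bar>H0\<bar> + 1)" unfolding H_def using R1
    by (auto simp: max_def)
  then have "ln H \<le> ln (R * (\<bar>H0\<bar> + 1))" using H1 by simp
  also have "\<dots> = U + ln (\<bar>H0\<bar> + 1)" using R1 lnR by (simp add: ln_mult)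
  finally have lnH: "ln H \<le> U + ln (\<bar>H0\<bar> + 1)" .
  have "w * (U + ln (\<bar>H0\<bar> + 1)) \<le> ln (real (b (Suc j)))"
    using hj unfolding U_def C_def by (simp add: algebra_simps)
  then have "1 / real (b (Suc j)) \<le> H powr (- w)"
    using powr_bound[OF H1 _ w lnH] bpos by simp
  show "\<exists>H::real. H > H0 \<and>
      (\<exists>P::int poly. degree P \<le> 1 \<and> real_of_int (height P) \<le> H \<and>
          0 < \<bar>poly (map_poly real_of_int P) (xi_bl b l)\<bar> \<and> \<bar>poly (map_poly real_of_int P) (xi_bl b l)\<bar> \<le> H powr (-w))"
  proof (intro exI conjI)
    show "H > H0" by (rule HH0)
    show "degree P \<le> 1" unfolding P_def by simp
    show "real_of_int (height P) \<le> H" using hP unfolding H_def by linarith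
    show "0 < \<bar>poly (map_poly real_of_int P) (xi_bl b l)\<bar>" using val D0 by simp
    show "\<bar>poly (map_poly real_of_int P) (xi_bl b l)\<bar> \<le> H powr (-w)"
      using val up \<open>1 / real (b (Suc j)) \<le> H powr (- w)\<close> by linarith
  qed
qed



lemma quad_part:
  fixes b l :: "nat \<Rightarrow> nat"
  assumes b0: "\<And>n. b n > 0" and l0: "\<And>n. l n > 0"
    and bt: "filterlim (\<lambda>n. real (b n)) at_top sequentially"
    and lt: "filterlim (\<lambda>n. real (l n)) at_top sequentially"
    and rt: "filterlim (\<lambda>n. ln (real (b (Suc n))) / (\<Sum>k\<le>n. real (l k) * ln (real (b k))))
           at_top sequentially"
    and w: "w \<ge> 0"
  shows "\<forall>H0. \<exists>H::real. H > H0 \<and> (\<exists>\<alpha>::real. \<exists>P::int poly. is_min_poly_Z P \<alpha> \<and> irreducible P \<and>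
      degree P = 2 \<and> real_of_int (height P) \<le> H \<and>
      0 < \<bar>xi_bl b l - \<alpha>\<bar> \<and> \<bar>xi_bl b l - \<alpha>\<bar> \<le> (1 / real_of_int (height P)) * H powr (-w) \<and>
      0 < \<bar>poly (map_poly real_of_int P) (xi_bl b l)\<bar> \<and> \<bar>poly (map_poly real_of_int P) (xi_bl b l)\<bar> \<le> H powr (-w))"
proof
  fix H0 :: real
  define a where "a = block_quotients b l"
  have pa: "posq a" unfolding a_def by (rule bq_posq[OF b0])
  have a0: "a 0 = 0" unfolding a_def by (rule bq0)
  define W where "W = w + 2"
  have W: "W \<ge> 0" unfolding W_def using w by simp
  define C where "C = W * (ln 3 + ln (\<bar>H0\<bar> + 1))"
  obtain j where hj: "2 * real (l (Suc j)) * ln (real (b (Suc j))) \<ge>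
       W * (ln 4 + ln (real (b (Suc j)) + 1) + 2 * (\<Sum>i<Suc j. real (l i) * ln (real (b i) + 1))) + C"
    and hj3: "real (b (Suc (Suc j))) > real (b (Suc j)) + 1"
    using ev_obtain[OF eventually_conj[OF asym_E2[OF b0 l0 bt lt rt W, of C] asym_E3[OF b0 l0 bt rt]]] by blast
  define J where "J = Suc j"
  define c where "c = b J"
  have c1: "c \<ge> 1" unfolding c_def using b0 by (simp add: Suc_le_eq)
  define U where "U = (\<Sum>i<J. real (l i) * ln (real (b i) + 1))"
  define LJ where "LJ = l J"
  have LJ1: "LJ \<ge> 1" unfolding LJ_def using l0 by (simp add: Suc_le_eq)
  define M where "M = St l J"
  define N where "N = St l (Suc J)"
  have NM: "N = M + LJ" unfolding N_def M_def LJ_def by (simp add: St_Suc)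
  have M1: "M \<ge> 1" unfolding M_def J_def St_Suc using l0[of j] by simp
  have hblock: "\<And>d. 1 \<le> d \<Longrightarrow> d \<le> LJ \<Longrightarrow> a (M + d) = c"
  proof -
    fix d :: nat assume "1 \<le> d" "d \<le> LJ"
    then show "a (M + d) = c"
      using bq_block[where d=d and j=J and b=b, OF l0] unfolding a_def M_def c_def LJ_def by simp
  qed
  have aN1: "a (Suc N) = b (Suc J)"
    using bq_block[where d=1 and j="Suc J" and b=b, OF l0] l0[of "Suc J"] unfolding a_def N_def by simp
  define \<beta> where "\<beta> = beta c"
  note bp = beta_props[OF c1, folded \<beta>_def]
  have \<beta>0: "\<beta> > 0" using bp(4) by simp
  define zN where "zN = cf_value (\<lambda>i. a (Suc N + i))"
  have xiN: "xi_bl b l = mobp a N zN" and zNb: "zN \<ge> real (b (Suc J))"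
    using cf_tail[OF pa, of N] aN1 unfolding zN_def xi_bl_def a_def by auto
  define zM where "zM = cf_value (\<lambda>i. a (Suc M + i))"
  have xiM: "xi_bl b l = mobp a M zM" and zMc: "zM \<ge> real (a (Suc M))"
    using cf_tail[OF pa, of M] unfolding zM_def xi_bl_def a_def by auto
  have "a (Suc M) = c" using hblock[of 1] LJ1 by simp
  then have zM1: "zM \<ge> 1" using zMc c1 by simp
  have bJ: "real (b (Suc J)) > real c + 1" using hj3 unfolding J_def c_def by simp
  have zN\<beta>: "zN > \<beta>" using zNb bJ bp(3) by linarith
  have zN1: "zN \<ge> 1" using zN\<beta> bp(4) by linarith
  define \<alpha> where "\<alpha> = mobp a M \<beta>"
  have F1: "mobp a N \<beta> = \<alpha>"
  proof -
    have "cfx a (M + LJ) \<beta> = cfx a M \<beta>"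
      by (rule cfx_fixed[OF pa hblock \<beta>0 bp(5)]) auto
    then show ?thesis unfolding \<alpha>_def NM using mobp_cfx[OF pa \<beta>0] by simp
  qed
  have "cq a (Suc N) \<ge> c ^ LJ"
    using cq_block_lower[where d=LJ and j=J and l=l and b=b, OF l0 b0] unfolding a_def NM M_def c_def LJ_def
    by simp
  then have "real (c ^ LJ) \<le> real (cq a (Suc N))" by (simp only: of_nat_le_iff)
  then have cqN: "real (cq a (Suc N)) \<ge> real c ^ LJ" by simp
  have cpos: "real c > 0" using c1 by simp
  have F2: "\<bar>xi_bl b l - \<alpha>\<bar> \<le> 1 / (real c ^ LJ)^2"
  proof -
    have "\<bar>xi_bl b l - \<alpha>\<bar> = \<bar>mobp a N zN - mobp a N \<beta>\<bar>" using xiN F1 by simp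
    also have "\<dots> \<le> 1 / real (cq a (Suc N))^2" by (rule mobp_bound[OF pa zN1 bp(4)])
    also have "\<dots> \<le> 1 / (real c ^ LJ)^2"
      using cqN cpos cq_basic[OF pa, of N] by (intro divide_left_mono power_mono mult_pos_pos) auto
    finally show ?thesis .
  qed
  have qN1: "real (cq a (Suc N)) \<ge> 1" using cq_basic[OF pa, of N] by simp
  have F3: "xi_bl b l \<noteq> \<alpha>"
  proof
    assume "xi_bl b l = \<alpha>"
    then have e0: "mobp a N zN - mobp a N \<beta> = 0" using xiN F1 by simp
    have d1: "real (cq a (Suc N)) * zN + real (cq a N) > 0" using qN1 zN1
      by (intro pos_lin) auto
    have d2: "real (cq a (Suc N)) * \<beta> + real (cq a N) > 0" using qN1 \<beta>0
      by (intro pos_lin) auto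
    have "mobp a N zN - mobp a N \<beta> =
       (real (cp a (Suc N)) * real (cq a N) - real (cp a N) * real (cq a (Suc N))) * (zN - \<beta>) /
       ((real (cq a (Suc N)) * zN + real (cq a N)) * (real (cq a (Suc N)) * \<beta> + real (cq a N)))"
      unfolding mobp_def using d1 d2 by (intro mob_diff) auto
    moreover have "(real (cp a (Suc N)) * real (cq a N) - real (cp a N) * real (cq a (Suc N))) \<noteq> 0"
      using det_abs[of a N] by auto
    ultimately have "mobp a N zN - mobp a N \<beta> \<noteq> 0" using zN\<beta> d1 d2 by simp
    then show False using e0 by simp
  qed
  define p where "p = cp a (Suc M)"
  define p' where "p' = cp a M"
  define q where "q = cq a (Suc M)"
  define q' where "q' = cq a M"
  have detM: "\<bar>real p * real q' - real p' * real q\<bar> = 1" unfolding p_def q_def p'_def q'_def by (rule det_abs)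
  have q1: "real q \<ge> 1" unfolding q_def using cq_basic[OF pa, of M] by simp
  define Q where "Q = qpoly (int c) (int p) (int p') (int q) (int q')"
  have Qmob: "poly (map_poly real_of_int Q) (mobp a M y) = (y^2 - real c * y - 1) / (real q * y + real q')^2"
    if "y > 0" for y
  proof -
    have "real q * y + real q' > 0" using q1 that by (intro pos_lin) auto
    then show ?thesis
      using qpoly_mob[of "int p" "int q'" "int p'" "int q" y "int c"] detM
      unfolding Q_def mobp_def p_def p'_def q_def q'_def by simp
  qed
  have F6: "poly (map_poly real_of_int Q) \<alpha> = 0"
    unfolding \<alpha>_def using Qmob[OF \<beta>0] bp(1) by simp
  have F5: "poly (map_poly real_of_int Q) (xi_bl b l) \<noteq> 0"
  proof
    assume "poly (map_poly real_of_int Q) (xi_bl b l) = 0"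
    then have "(zM^2 - real c * zM - 1) / (real q * zM + real q')^2 = 0"
      using Qmob[of zM] zM1 xiM by simp
    moreover have "real q * zM + real q' > 0" using q1 zM1 by (intro pos_lin) auto
    ultimately have "zM^2 - real c * zM - 1 = 0" by simp
    then have "zM = \<beta>" unfolding \<beta>_def using beta_unique[OF c1, of zM] zM1 by simp
    then show False using F3 xiM \<alpha>_def by simp
  qed
  have Q0: "Q \<noteq> 0" using F5 by auto
  have F7: "\<alpha> \<notin> \<rat>"
  proof
    assume ar: "\<alpha> \<in> \<rat>"
    have D: "real q * \<beta> + real q' > 0" using q1 \<beta>0 by (intro pos_lin) auto
    have eq: "\<alpha> * (real q * \<beta> + real q') = real p * \<beta> + real p'"
      unfolding \<alpha>_def mobp_def p_def q_def p'_def q'_def using D unfolding p_def q_def p'_def q'_def by simp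
    then have eq2: "(\<alpha> * real q - real p) * \<beta> = real p' - \<alpha> * real q'" by (simp add: algebra_simps)
    show False
    proof (cases "\<alpha> * real q - real p = 0")
      case True
      then have "real p' = \<alpha> * real q'" "real p = \<alpha> * real q" using eq2 by simp_all
      then have "real p * real q' - real p' * real q = 0" by simp
      then show False using detM by simp
    next
      case False
      then have "\<beta> = (real p' - \<alpha> * real q') / (\<alpha> * real q - real p)" using eq2 by (simp add: field_simps)
      moreover have "(real p' - \<alpha> * real q') / (\<alpha> * real q - real p) \<in> \<rat>" using ar
        by (intro Rats_divide Rats_diff Rats_mult) auto
      ultimately show False using beta_irrat[OF c1] unfolding \<beta>_def by simp
    qed
  qed
  have dQ: "degree Q = 2"
  proof -
    have le: "degree Q \<le> 2" unfolding Q_def qpoly_def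
      by (intro degree_le) (auto simp: coeff_pCons split: nat.splits)
    show ?thesis
    proof (rule ccontr)
      assume "degree Q \<noteq> 2"
      then have "degree Q \<le> 1" using le by simp
      then show False using lin_root_rat[OF Q0 _ F6] F7 by simp
    qed
  qed
  define P where "P = primitive_part Q"
  have cP: "content P = 1" unfolding P_def using Q0 by simp
  have dP: "degree P = 2" unfolding P_def using dQ by simp
  define k where "k = content Q"
  have k1: "k \<ge> 1" unfolding k_def using content_int_nonneg[of Q] Q0 content_eq_zero_iff[of Q] by linarith
  have QP: "Q = smult k P" unfolding P_def k_def by simp
  have evQP: "poly (map_poly real_of_int Q) x = real_of_int k * poly (map_poly real_of_int P) x" for x
    by (subst QP, subst map_poly_smult_int) simp
  have F6P: "poly (map_poly real_of_int P) \<alpha> = 0" using F6 evQP[of \<alpha>] k1 by simp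
  have irrP: "irreducible P" by (rule irreducible_quad[OF cP dP F6P F7])
  have minP: "is_min_poly_Z P \<alpha>" unfolding is_min_poly_Z_def using irrP dP F6P by simp
  have hPQ: "height P \<le> height Q"
  proof (rule height_le)
    fix i
    have "coeff Q i = k * coeff P i" using QP by simp
    then have "\<bar>coeff P i\<bar> \<le> \<bar>coeff Q i\<bar>" using k1 by (simp add: abs_mult mult_le_cancel_right1)
    then show "\<bar>coeff P i\<bar> \<le> height Q" using coeff_le_height[of Q i] by linarith
  qed
  have P0: "P \<noteq> 0" using dP by auto
  have hP1: "height P \<ge> 1" by (rule height_pos[OF P0])
  have polyPQ: "\<bar>poly (map_poly real_of_int P) (xi_bl b l)\<bar> \<le> \<bar>poly (map_poly real_of_int Q) (xi_bl b l)\<bar>"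
    using evQP[of "xi_bl b l"] k1 by (simp add: abs_mult mult_le_cancel_right1)
  have polyP0: "poly (map_poly real_of_int P) (xi_bl b l) \<noteq> 0" using evQP[of "xi_bl b l"] F5 by auto
  define R where "R = Rp a (Suc M)"
  have R1: "R \<ge> 1" unfolding R_def using Rp_pos[of a "Suc M"] by simp
  have pqR: "p \<le> R" "q \<le> R" "p' \<le> R" "q' \<le> R"
    using cpq_le_Rp[of a "Suc M"] cpq_le_Rp[of a M] Rp_mono[of a M]
    unfolding R_def p_def q_def p'_def q'_def by auto
  have hQ: "height Q \<le> 4 * (int c + 1) * (int R)^2"
    unfolding Q_def by (rule qpoly_height) (use pqR in auto)
  define HQ where "HQ = 4 * (real c + 1) * (real R)^2"
  have hQr: "real_of_int (height Q) \<le> HQ"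
  proof -
    have "real_of_int (height Q) \<le> real_of_int (4 * (int c + 1) * (int R)^2)" using hQ by linarith
    then show ?thesis unfolding HQ_def by simp
  qed
  have HQ1: "HQ \<ge> 1"
  proof -
    have "real R ^ 2 \<ge> 1" using R1 by (intro one_le_power) simp
    moreover have "real c + 1 \<ge> 1" by simp
    ultimately have "(real c + 1) * real R ^ 2 \<ge> 1 * 1" by (intro mult_mono) auto
    moreover have "HQ = 4 * ((real c + 1) * real R ^ 2)" unfolding HQ_def by (simp only: mult.assoc)
    ultimately show ?thesis by linarith
  qed
  have lnR: "ln (real R) = U" unfolding R_def U_def a_def M_def by (rule Rp_ln[OF l0])
  define K where "K = 3 * max (real_of_int (height Q)) (\<bar>H0\<bar> + 1)"
  have K3: "K \<ge> 3" unfolding K_def by simp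
  define mx where "mx = max (real_of_int (height Q)) (\<bar>H0\<bar> + 1)"
  have Kmx: "K = 3 * mx" unfolding K_def mx_def ..
  have mx1: "\<bar>H0\<bar> + 1 \<le> mx" "real_of_int (height Q) \<le> mx" unfolding mx_def by simp_all
  have KH0: "K > H0"
  proof -
    have "H0 \<le> \<bar>H0\<bar>" "0 \<le> \<bar>H0\<bar>" by simp_all
    then show ?thesis unfolding Kmx using mx1 by linarith
  qed
  have KhQ: "3 * real_of_int (height Q) \<le> K" unfolding K_def by simp
  have "K \<le> 3 * (HQ * (\<bar>H0\<bar> + 1))"
  proof -
    have "HQ * 1 \<le> HQ * (\<bar>H0\<bar> + 1)" using HQ1 by (intro mult_left_mono) auto
    moreover have "1 * (\<bar>H0\<bar> + 1) \<le> HQ * (\<bar>H0\<bar> + 1)" using HQ1 by (intro mult_right_mono) auto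
    ultimately have "max (real_of_int (height Q)) (\<bar>H0\<bar> + 1) \<le> HQ * (\<bar>H0\<bar> + 1)" using hQr by simp
    then show ?thesis unfolding K_def by simp
  qed
  then have "ln K \<le> ln (3 * (HQ * (\<bar>H0\<bar> + 1)))" using K3 by simp
  also have "\<dots> = ln 3 + ln 4 + ln (real c + 1) + 2 * U + ln (\<bar>H0\<bar> + 1)"
  proof -
    have hp: "\<bar>H0\<bar> + 1 > 0" using abs_ge_zero[of H0] by linarith
    have HQp: "HQ > 0" using HQ1 by simp
    have Rp: "real R > 0" using R1 by simp
    have cp1: "real c + 1 > 0" by simp
    have "ln (3 * (HQ * (\<bar>H0\<bar> + 1))) = ln 3 + (ln HQ + ln (\<bar>H0\<bar> + 1))"
      using hp HQp by (simp add: ln_mult)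
    moreover have "ln HQ = ln 4 + ln (real c + 1) + 2 * ln (real R)"
    proof -
      have "HQ = (4 * (real c + 1)) * (real R ^ 2)" unfolding HQ_def ..
      then have "ln HQ = ln (4 * (real c + 1)) + ln (real R ^ 2)" using cp1 Rp by (simp add: ln_mult)
      also have "ln (4 * (real c + 1)) = ln 4 + ln (real c + 1)" using cp1 by (simp only: ln_mult) simp
      also have "ln (real R ^ 2) = 2 * ln (real R)" using Rp by (simp add: ln_realpow)
      finally show ?thesis .
    qed
    ultimately show ?thesis using lnR by simp
  qed
  finally have lnK: "ln K \<le> ln 3 + ln 4 + ln (real c + 1) + 2 * U + ln (\<bar>H0\<bar> + 1)" .
  have lnB: "ln ((real c ^ LJ)^2) = 2 * real LJ * ln (real c)"
    using cpos by (simp add: ln_realpow)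
  have "W * (ln 3 + ln 4 + ln (real c + 1) + 2 * U + ln (\<bar>H0\<bar> + 1)) \<le> ln ((real c ^ LJ)^2)"
    unfolding lnB using hj unfolding C_def U_def J_def c_def LJ_def by (simp add: algebra_simps)
  moreover have Bpos: "(real c ^ LJ)^2 > 0" using cpos by simp
  ultimately have "1 / (real c ^ LJ)^2 \<le> K powr (- W)"
    using K3 by (intro powr_bound[OF _ Bpos W lnK]) auto
  then have distK: "\<bar>xi_bl b l - \<alpha>\<bar> \<le> K powr (- W)" using F2 by linarith
  have KW: "K powr (- W) = K powr (- w) / K^2"
  proof -
    have Kp: "K > 0" using K3 by simp
    have "K powr (- W) = K powr (- w + - 2)" unfolding W_def by simp
    also have "\<dots> = K powr (- w) * K powr (- 2)" by (rule powr_add)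
    also have "K powr (- 2) = 1 / K powr 2" by (rule powr_minus_divide)
    also have "K powr 2 = K ^ 2" using Kp by simp
    finally show ?thesis by simp
  qed
  have Kw0: "K powr (- w) > 0" using K3 by simp
  show "\<exists>H::real. H > H0 \<and> (\<exists>\<alpha>::real. \<exists>P::int poly. is_min_poly_Z P \<alpha> \<and> irreducible P \<and>
      degree P = 2 \<and> real_of_int (height P) \<le> H \<and>
      0 < \<bar>xi_bl b l - \<alpha>\<bar> \<and> \<bar>xi_bl b l - \<alpha>\<bar> \<le> (1 / real_of_int (height P)) * H powr (-w) \<and>
      0 < \<bar>poly (map_poly real_of_int P) (xi_bl b l)\<bar> \<and> \<bar>poly (map_poly real_of_int P) (xi_bl b l)\<bar> \<le> H powr (-w))"
  proof (intro exI conjI)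
    show "K > H0" by (rule KH0)
    show "is_min_poly_Z P \<alpha>" by (rule minP)
    show "irreducible P" by (rule irrP)
    show "degree P = 2" by (rule dP)
    have hPK: "real_of_int (height P) \<le> K" using hPQ KhQ hP1 by linarith
    show "real_of_int (height P) \<le> K" by (rule hPK)
    show "0 < \<bar>xi_bl b l - \<alpha>\<bar>" using F3 by simp
    have "K powr (- w) / K^2 \<le> K powr (- w) / K"
      using K3 Kw0 by (intro divide_left_mono) (auto simp: power2_eq_square)
    also have "\<dots> \<le> (1 / real_of_int (height P)) * K powr (- w)"
      using hPK hP1 Kw0 by (simp add: divide_left_mono)
    finally show "\<bar>xi_bl b l - \<alpha>\<bar> \<le> (1 / real_of_int (height P)) * K powr (-w)"
      using distK KW by simp
    show "0 < \<bar>poly (map_poly real_of_int P) (xi_bl b l)\<bar>" using polyP0 by simp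
    have "\<bar>poly (map_poly real_of_int Q) (xi_bl b l)\<bar>
        = \<bar>poly (map_poly real_of_int Q) (xi_bl b l) - poly (map_poly real_of_int Q) \<alpha>\<bar>" using F6 by simp
    also have "\<dots> \<le> 3 * real_of_int (height Q) * \<bar>xi_bl b l - \<alpha>\<bar>"
    proof -
      have x1: "\<bar>xi_bl b l\<bar> \<le> 1" using mobp_unit[OF pa a0 M1 zM1[THEN order.strict_trans2[OF zero_less_one]]] xiM by simp
      have a1: "\<bar>\<alpha>\<bar> \<le> 1" using mobp_unit[OF pa a0 M1 \<beta>0] unfolding \<alpha>_def by simp
      show ?thesis using deg2_diff[of Q "xi_bl b l" \<alpha>] dQ x1 a1 by simp
    qed
    also have "\<dots> \<le> K * K powr (- W)"
      using KhQ distK K3 by (intro mult_mono) auto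
    also have "\<dots> = K powr (- w) / K" using KW K3 by (simp add: power2_eq_square)
    also have "\<dots> \<le> K powr (- w)" using K3 Kw0 by (simp add: divide_le_eq)
    finally show "\<bar>poly (map_poly real_of_int P) (xi_bl b l)\<bar> \<le> K powr (-w)" using polyPQ by linarith
  qed
qed


theorem theorem1p2:
  fixes b l :: "nat \<Rightarrow> nat"
  assumes "\<And>n. b n > 0" and "\<And>n. l n > 0"
    and "filterlim (\<lambda>n. real (b n)) at_top sequentially"
    and "filterlim (\<lambda>n. real (l n)) at_top sequentially"
    and "filterlim (\<lambda>n. ln (real (b (Suc n))) / (\<Sum>k\<le>n. real (l k) * ln (real (b k))))
           at_top sequentially"
  shows "liouville (xi_bl b l) \<and> w_eq 2 (xi_bl b l) = \<infinity> \<and> w_star_eq 2 (xi_bl b l) = \<infinity>"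
proof (intro conjI)
  show "liouville (xi_bl b l)"
    unfolding liouville_def w1_def
    by (rule ereal_sup_inf, rule liou_part[OF assms(1,2,3,5)])
  show "w_eq 2 (xi_bl b l) = \<infinity>"
    unfolding w_eq_def
  proof (rule ereal_sup_inf)
    fix w :: real assume w: "w \<ge> 0"
    note Q = quad_part[OF assms w]
    show "\<forall>H0. \<exists>H::real. H > H0 \<and>
      (\<exists>P::int poly. irreducible P \<and> degree P = 2 \<and> real_of_int (height P) \<le> H \<and>
          0 < \<bar>poly (map_poly real_of_int P) (xi_bl b l)\<bar> \<and> \<bar>poly (map_poly real_of_int P) (xi_bl b l)\<bar> \<le> H powr (-w))"
    proof
      fix H0 :: real
      from Q obtain H \<alpha> P where "H > H0" "is_min_poly_Z P \<alpha>" "irreducible P"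
        "degree P = 2" "real_of_int (height P) \<le> H"
        "0 < \<bar>poly (map_poly real_of_int P) (xi_bl b l)\<bar>" "\<bar>poly (map_poly real_of_int P) (xi_bl b l)\<bar> \<le> H powr (-w)"
        by blast
      then show "\<exists>H::real. H > H0 \<and>
      (\<exists>P::int poly. irreducible P \<and> degree P = 2 \<and> real_of_int (height P) \<le> H \<and>
          0 < \<bar>poly (map_poly real_of_int P) (xi_bl b l)\<bar> \<and> \<bar>poly (map_poly real_of_int P) (xi_bl b l)\<bar> \<le> H powr (-w))"
        by blast
    qed
  qed
  show "w_star_eq 2 (xi_bl b l) = \<infinity>"
    unfolding w_star_eq_def
  proof (rule ereal_sup_inf)
    fix w :: real assume w: "w \<ge> 0"
    note Q = quad_part[OF assms w]
    show "\<forall>H0. \<exists>H::real. H > H0 \<and>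
      (\<exists>\<alpha>::real. \<exists>P::int poly. is_min_poly_Z P \<alpha> \<and> degree P = 2 \<and>
          real_of_int (height P) \<le> H \<and>
          0 < \<bar>xi_bl b l - \<alpha>\<bar> \<and> \<bar>xi_bl b l - \<alpha>\<bar> \<le> (1 / real_of_int (height P)) * H powr (-w))"
    proof
      fix H0 :: real
      from Q obtain H \<alpha> P where "H > H0" "is_min_poly_Z P \<alpha>"
        "degree P = 2" "real_of_int (height P) \<le> H"
        "0 < \<bar>xi_bl b l - \<alpha>\<bar>" "\<bar>xi_bl b l - \<alpha>\<bar> \<le> (1 / real_of_int (height P)) * H powr (-w)"
        by blast
      then show "\<exists>H::real. H > H0 \<and>
      (\<exists>\<alpha>::real. \<exists>P::int poly. is_min_poly_Z P \<alpha> \<and> degree P = 2 \<and>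
          real_of_int (height P) \<le> H \<and>
          0 < \<bar>xi_bl b l - \<alpha>\<bar> \<and> \<bar>xi_bl b l - \<alpha>\<bar> \<le> (1 / real_of_int (height P)) * H powr (-w))"
        by blast
    qed
  qed
qed

end
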